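(* Let $n,p\ge1$ be integers and let $\mathbf{A}^{p+1}_{n+1}$ be as defined in the context. The implicative filters of $\mathbf{A}^{p+1}_{n+1}$ different from $A$ are exactly the three sets $\{\top\}$, $f_\omega=\{\langle(n,r),p\rangle: r\le0\}$, and ${\uparrow}\langle(0,0),p\rangle=\{a\in A: a\ge\langle(0,0),p\rangle\}$ (and $\{\top\}\subsetneq f_\omega\subsetneq{\uparrow}\langle(0,0),p\rangle$).
   Context: Order $\mathbb{Z}\times\mathbb{Z}$ lexicographically: $(m,r)\preccurlyeq(k,s)$ iff $m<k$, or $m=k$ and $r\le s$; addition/subtraction of pairs is componentwise, and $\min,\max$ of pairs refer to $\preccurlyeq$. For an integer $n\ge1$ let $L^\omega_{n+1}=\{(m,r)\in\mathbb{Z}^2:(0,0)\preccurlyeq(m,r)\preccurlyeq(n,0)\}$ with $x\ast y=\max\{(0,0),x+y-(n,0)\}$ and $x\to y=\min\{(n,0),(n,0)-x+y\}$. For an integer $p\ge1$ let $L_{p+1}=\{0,1,\dots,p\}$ with $\alpha\ast\beta=\max\{0,\alpha+\beta-p\}$. Define $$A=A^{p+1}_{n+1}=\{\langle(m,r),\alpha\rangle:(m,r)\in L^\omega_{n+1},\ \alpha\in\{0,p\}\}\cup\{\langle(m,r),\alpha\rangle:(0,0)\preccurlyeq(m,r)\preccurlyeq(n-1,0),\ 0<\alpha<p\}.$$ Order: $\langle(m,r),\alpha\rangle\le\langle(k,s),\beta\rangle$ iff one of: (o1) $\alpha\neq0$, $\alpha\le\beta$ and $(m,r)\preccurlyeq(k,s)$;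 (o2) $\alpha=\beta=0$ and $(k,s)\preccurlyeq(m,r)$; (o3) $\alpha=0$, $\beta\ne0$ and $(n-1,0)\preccurlyeq(m+k,r+s)$. $\wedge,\vee$ denote meet and join for $\le$. Put $\bot=\langle(n,0),0\rangle$, $\top=\langle(n,0),p\rangle$. For $a=\langle(m,r),\alpha\rangle$, $b=\langle(k,s),\beta\rangle\in A$ define $a\odot b$ by: (P1) if $\alpha,\beta\ge1$ and $\alpha+\beta>p$: $a\odot b=\langle(m,r)\ast(k,s),\alpha+\beta-p\rangle$; (P2) if $\alpha,\beta\ge1$ and $\alpha+\beta\le p$: $a\odot b=\langle\min\{(n,0),(2n-(m+k+1),-(r+s))\},0\rangle$; (P3) if $\alpha\ge1$, $\beta=0$: $a\odot b=\langle(m,r)\to(k,s),0\rangle$, and if $\alpha=0$, $\beta\ge1$: $a\odot b=\langle(k,s)\to(m,r),0\rangle$; (P4) if $\alpha=\beta=0$: $a\odot b=\langle\min\{(n,0),(m+k+1,r+s)\},0\rangle$. Define $\sim\langle(m,r),\alpha\rangle=\langle(m,r),p-\alpha\rangle$ if $\alpha\in\{0,p\}$, and $\sim\langle(m,r),\alpha\rangle=\langle(n-1-m,-r),p-\alpha\rangle$ if $0<\alpha<p$. Define $a\Rightarrow b=\sim(a\odot\sim b)$. The algebra $\mathbf{A}^{p+1}_{n+1}$ is $\langle A;\odot,\Rightarrow,\wedge,\vee,\bot,\top\rangle$. An implicative filter of $\mathbf{A}^{p+1}_{n+1}$ is a subset $F\subseteq A$ with $\top\in F$, closed under $\odot$,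 and upward closed w.r.t. $\le$. *)

theory Defs
  imports Main
begin

type_synonym zz = "int \<times> int"

definition lle :: "zz \<Rightarrow> zz \<Rightarrow> bool" where
  "lle x y \<longleftrightarrow> fst x < fst y \<or> (fst x = fst y \<and> snd x \<le> snd y)"

definition lmin :: "zz \<Rightarrow> zz \<Rightarrow> zz" where
  "lmin x y = (if lle x y then x else y)"

definition lmax :: "zz \<Rightarrow> zz \<Rightarrow> zz" where
  "lmax x y = (if lle x y then y else x)"

definition zadd :: "zz \<Rightarrow> zz \<Rightarrow> zz" where
  "zadd x y = (fst x + fst y, snd x + snd y)"

definition zsub :: "zz \<Rightarrow> zz \<Rightarrow> zz" where
  "zsub x y = (fst x - fst y, snd x - snd y)"

definition Lw :: "int \<Rightarrow> zz set" where
  "Lw n = {x. lle (0,0) x \<and> lle x (n,0)}"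

definition Lstar :: "int \<Rightarrow> zz \<Rightarrow> zz \<Rightarrow> zz" where
  "Lstar n x y = lmax (0,0) (zsub (zadd x y) (n,0))"

definition Limp :: "int \<Rightarrow> zz \<Rightarrow> zz \<Rightarrow> zz" where
  "Limp n x y = lmin (n,0) (zadd (zsub (n,0) x) y)"

text \<open>Elements \<open>\<langle>(m,r),\<alpha>\<rangle>\<close> are represented as \<open>((m,r),\<alpha>)\<close>.\<close>
type_synonym elt = "zz \<times> int"

definition Acar :: "int \<Rightarrow> int \<Rightarrow> elt set" where
  "Acar n p = {(x,\<alpha>). x \<in> Lw n \<and> (\<alpha> = 0 \<or> \<alpha> = p)}
            \<union> {(x,\<alpha>). lle (0,0) x \<and> lle x (n-1,0) \<and> 0 < \<alpha> \<and> \<alpha> < p}"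

definition Ale :: "int \<Rightarrow> int \<Rightarrow> elt \<Rightarrow> elt \<Rightarrow> bool" where
  "Ale n p a b \<longleftrightarrow>
     (let x = fst a; \<alpha> = snd a; y = fst b; \<beta> = snd b in
       (\<alpha> \<noteq> 0 \<and> \<alpha> \<le> \<beta> \<and> lle x y)
     \<or> (\<alpha> = 0 \<and> \<beta> = 0 \<and> lle y x)
     \<or> (\<alpha> = 0 \<and> \<beta> \<noteq> 0 \<and> lle (n-1,0) (zadd x y)))"

definition Atop :: "int \<Rightarrow> int \<Rightarrow> elt" where
  "Atop n p = ((n,0), p)"

definition Abot :: "int \<Rightarrow> int \<Rightarrow> elt" where
  "Abot n p = ((n,0), 0)"

definition Aprod :: "int \<Rightarrow> int \<Rightarrow> elt \<Rightarrow> elt \<Rightarrow> elt" where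
  "Aprod n p a b =
     (let x = fst a; \<alpha> = snd a; y = fst b; \<beta> = snd b in
      if 1 \<le> \<alpha> \<and> 1 \<le> \<beta> \<and> \<alpha> + \<beta> > p then (Lstar n x y, \<alpha> + \<beta> - p)
      else if 1 \<le> \<alpha> \<and> 1 \<le> \<beta> then
        (lmin (n,0) (2*n - (fst x + fst y + 1), - (snd x + snd y)), 0)
      else if 1 \<le> \<alpha> \<and> \<beta> = 0 then (Limp n x y, 0)
      else if \<alpha> = 0 \<and> 1 \<le> \<beta> then (Limp n y x, 0)
      else (lmin (n,0) (fst x + fst y + 1, snd x + snd y), 0))"

definition impl_filter :: "int \<Rightarrow> int \<Rightarrow> elt set \<Rightarrow> bool" where
  "impl_filter n p F \<longleftrightarrow>
     F \<subseteq> Acar n p \<and> Atop n p \<in> F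
     \<and> (\<forall>a\<in>F. \<forall>b\<in>F. Aprod n p a b \<in> F)
     \<and> (\<forall>a\<in>F. \<forall>b\<in>Acar n p. Ale n p a b \<longrightarrow> b \<in> F)"

definition f_omega :: "int \<Rightarrow> int \<Rightarrow> elt set" where
  "f_omega n p = {((n,r),p) | r. r \<le> 0}"

definition up00 :: "int \<Rightarrow> int \<Rightarrow> elt set" where
  "up00 n p = {a \<in> Acar n p. Ale n p ((0,0),p) a}"

end

theory Submission
  imports Defs
begin

lemma Acar_iff: "((m,r),a) \<in> Acar n p \<longleftrightarrow>
   (0 < m \<or> (m=0 \<and> 0 \<le> r)) \<and> (m < n \<or> (m = n \<and> r \<le> 0)) \<and>
   (a = 0 \<or> a = p \<or> (0<a \<and> a<p \<and> (m < n-1 \<or> (m = n-1 \<and> r \<le> 0))))"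
  unfolding Acar_def Lw_def lle_def by auto

lemma acar_m: "((m,r),a) \<in> Acar n p \<Longrightarrow> 0 \<le> m"
  by (auto simp: Acar_iff)

lemma acar_mn: "((m,r),a) \<in> Acar n p \<Longrightarrow> m \<le> n"
  by (auto simp: Acar_iff)

lemma prod_pp: "p \<ge> 1 \<Longrightarrow> Aprod n p (x,p) (y,p) = (Lstar n x y, p)"
  unfolding Aprod_def by (simp add: Let_def)

lemma prod_00: "Aprod n p (x,0) (y,0) = (lmin (n,0) (fst x+fst y+1, snd x+snd y), 0)"
  unfolding Aprod_def by (simp add: Let_def)

lemma prod_mid: "1 \<le> a \<Longrightarrow> 1 \<le> b \<Longrightarrow> Aprod n p (x,a) (y,b) =
   (if a+b>p then (Lstar n x y, a+b-p) else (lmin (n,0) (2*n - (fst x + fst y + 1), - (snd x + snd y)), 0))"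
  unfolding Aprod_def by (simp add: Let_def)

lemma filt_prod: "impl_filter n p F \<Longrightarrow> a \<in> F \<Longrightarrow> b \<in> F \<Longrightarrow> Aprod n p a b \<in> F"
  unfolding impl_filter_def by blast

lemma filt_sub: "impl_filter n p F \<Longrightarrow> a \<in> F \<Longrightarrow> a \<in> Acar n p"
  unfolding impl_filter_def by blast

lemma filt_up: "impl_filter n p F \<Longrightarrow> a \<in> F \<Longrightarrow> b \<in> Acar n p \<Longrightarrow> Ale n p a b \<Longrightarrow> b \<in> F"
  unfolding impl_filter_def by blast

lemma filt_top: "impl_filter n p F \<Longrightarrow> Atop n p \<in> F"
  unfolding impl_filter_def by blast

lemma L_bot:
  assumes "n \<ge> 1" "p \<ge> 1" "impl_filter n p F" "Abot n p \<in> F"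
  shows "F = Acar n p"
proof
  show "F \<subseteq> Acar n p" using assms(3) unfolding impl_filter_def by blast
  show "Acar n p \<subseteq> F"
  proof
    fix b assume b: "b \<in> Acar n p"
    obtain m r a where [simp]: "b = ((m,r),a)" by (metis prod.collapse)
    have "Ale n p (Abot n p) b" using b assms(1,2) unfolding Ale_def Abot_def
      by (auto simp: Acar_iff lle_def zadd_def Let_def)
    thus "b \<in> F" using filt_up[OF assms(3,4) b] by blast
  qed
qed

lemma L_zero:
  assumes "n \<ge> 1" "p \<ge> 1" "impl_filter n p F" "((m,r),0) \<in> F"
  shows "Abot n p \<in> F"
proof -
  have "\<forall>j::nat. Abot n p \<in> F \<or> (\<exists>m' r'. ((m',r'),0) \<in> F \<and> m' \<ge> int j)"
  proof
    fix j :: nat show "Abot n p \<in> F \<or> (\<exists>m' r'. ((m',r'),0) \<in> F \<and> m' \<ge> int j)"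
    proof (induction j)
      case 0
      have "m \<ge> 0" using filt_sub[OF assms(3,4)] by (auto simp: Acar_iff)
      then show ?case using assms(4) by auto
    next
      case (Suc j)
      show ?case
      proof (cases "Abot n p \<in> F")
        case False
        then obtain m' r' where h: "((m',r'),0) \<in> F" "m' \<ge> int j" using Suc by blast
        have pr: "Aprod n p ((m',r'),0) ((m',r'),0) \<in> F" using filt_prod[OF assms(3) h(1) h(1)] .
        show ?thesis
        proof (cases "lle (n,0) (2*m'+1, 2*r')")
          case True
          then show ?thesis using pr by (simp add: prod_00 lmin_def Abot_def)
        next
          case False
          then have "lmin (n,0) (2*m'+1,2*r') = (2*m'+1,2*r')" by (simp add: lmin_def)
          then have "((2*m'+1, 2*r'),0) \<in> F" using pr by (simp add: prod_00)
          moreover have "2*m'+1 \<ge> int (Suc j)" using h(2) by simp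
          ultimately show ?thesis by blast
        qed
      qed simp
    qed
  qed
  then have "Abot n p \<in> F \<or> (\<exists>m' r'. ((m',r'),0) \<in> F \<and> m' \<ge> int (nat n + 1))" by blast
  moreover have "\<And>m' r'. ((m',r'),0) \<in> F \<Longrightarrow> m' \<le> n"
    using filt_sub[OF assms(3)] acar_mn by blast
  ultimately show ?thesis using assms(1) by force
qed

lemma L_mid:
  assumes "n \<ge> 1" "p \<ge> 1" "impl_filter n p F" "((m,r),a) \<in> F" "0 < a" "a < p"
  shows "\<exists>x. (x,0) \<in> F"
proof -
  have "\<forall>k::nat. (\<exists>x. (x,0) \<in> F) \<or> (\<exists>x b. (x,b) \<in> F \<and> 0 < b \<and> b \<le> a - int k)"
  proof
    fix k :: nat show "(\<exists>x. (x,0) \<in> F) \<or> (\<exists>x b. (x,b) \<in> F \<and> 0 < b \<and> b \<le> a - int k)"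
    proof (induction k)
      case 0 then show ?case using assms(4,5) by force
    next
      case (Suc k)
      show ?case
      proof (cases "\<exists>x. (x,0) \<in> F")
        case False
        then obtain x b where h: "(x,b) \<in> F" "0 < b" "b \<le> a - int k" using Suc by blast
        have pr: "Aprod n p ((m,r),a) (x,b) \<in> F" using filt_prod[OF assms(3) assms(4) h(1)] .
        show ?thesis
        proof (cases "a + b > p")
          case True
          then have "(Lstar n (m,r) x, a+b-p) \<in> F" using pr h assms by (simp add: prod_mid)
          moreover have "0 < a+b-p" "a+b-p \<le> a - int (Suc k)" using True h assms by auto
          ultimately show ?thesis by blast
        next
          case False
          then have "(lmin (n,0) (2*n - (fst (m,r) + fst x + 1), - (snd (m,r) + snd x)), 0) \<in> F"
            using pr h assms by (simp add: prod_mid)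
          then show ?thesis by blast
        qed
      qed simp
    qed
  qed
  then have "(\<exists>x. (x,0) \<in> F) \<or> (\<exists>x b. (x,b) \<in> F \<and> 0 < b \<and> b \<le> a - int (nat a))" by blast
  moreover have "a - int (nat a) = 0" using assms(5) by simp
  ultimately show ?thesis by force
qed

lemma L_allp:
  assumes "n \<ge> 1" "p \<ge> 1" "impl_filter n p F" "F \<noteq> Acar n p" "x \<in> F"
  shows "snd x = p"
proof -
  obtain m r a where xe: "x = ((m,r),a)" by (metis prod.collapse)
  have noz: "\<And>y. (y,0) \<notin> F"
  proof
    fix y assume "(y,0) \<in> F"
    moreover obtain m' r' where "y = (m',r')" by fastforce
    ultimately have "Abot n p \<in> F" using L_zero assms by blast
    thus False using L_bot assms by blast
  qed
  have "((m,r),a) \<in> Acar n p" using filt_sub[OF assms(3,5)] xe by simp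
  then have "a = 0 \<or> a = p \<or> (0 < a \<and> a < p)" by (auto simp: Acar_iff)
  moreover have "a \<noteq> 0" using noz assms(5) xe by blast
  moreover have "\<not> (0 < a \<and> a < p)" using L_mid[OF assms(1,2,3)] assms(5) xe noz by blast
  ultimately show ?thesis using xe by auto
qed

lemma L_up: "p \<ge> 1 \<Longrightarrow> up00 n p = {a \<in> Acar n p. snd a = p}"
  unfolding up00_def Ale_def
  by (auto simp: Let_def Acar_iff lle_def)

lemma L_zero00:
  assumes "n \<ge> 1" "p \<ge> 1" "impl_filter n p F" "\<forall>x\<in>F. snd x = p" "((m,r),p) \<in> F" "m < n"
  shows "((0,0),p) \<in> F"
proof -
  have "\<forall>k::nat. ((0,0),p) \<in> F \<or> (\<exists>m' r'. ((m',r'),p) \<in> F \<and> m' \<le> m - int k)"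
  proof
    fix k :: nat show "((0,0),p) \<in> F \<or> (\<exists>m' r'. ((m',r'),p) \<in> F \<and> m' \<le> m - int k)"
    proof (induction k)
      case 0 then show ?case using assms by auto
    next
      case (Suc k)
      show ?case
      proof (cases "((0,0),p) \<in> F")
        case False
        then obtain m' r' where h: "((m',r'),p) \<in> F" "m' \<le> m - int k" using Suc by blast
        have pr: "(Lstar n (m,r) (m',r'), p) \<in> F"
          using filt_prod[OF assms(3) assms(5) h(1)] assms(2) by (simp add: prod_pp)
        show ?thesis
        proof (cases "lle (0,0) (m+m'-n, r+r')")
          case True
          then have "((m+m'-n, r+r'),p) \<in> F" using pr
            by (simp add: Lstar_def lmax_def zadd_def zsub_def)
          moreover have "m+m'-n \<le> m - int (Suc k)" using h assms by simp
          ultimately show ?thesis by blast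
        next
          case False
          then show ?thesis using pr by (simp add: Lstar_def lmax_def zadd_def zsub_def)
        qed
      qed simp
    qed
  qed
  then have "((0,0),p) \<in> F \<or> (\<exists>m' r'. ((m',r'),p) \<in> F \<and> m' \<le> m - int (nat m + 1))" by blast
  moreover have "\<And>m' r'. ((m',r'),p) \<in> F \<Longrightarrow> m' \<ge> 0"
    using filt_sub[OF assms(3)] acar_m by blast
  moreover have "m \<ge> 0" using filt_sub[OF assms(3,5)] by (auto simp: Acar_iff)
  ultimately show ?thesis by force
qed

lemma L_neg:
  assumes "n \<ge> 1" "p \<ge> 1" "impl_filter n p F" "((n,r),p) \<in> F" "r < 0"
  shows "f_omega n p \<subseteq> F"
proof -
  have key: "\<forall>k::nat. \<exists>t. ((n,t),p) \<in> F \<and> t \<le> - int k"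
  proof
    fix k :: nat show "\<exists>t. ((n,t),p) \<in> F \<and> t \<le> - int k"
    proof (induction k)
      case 0 then show ?case using filt_top[OF assms(3)] by (auto simp: Atop_def)
    next
      case (Suc k)
      then obtain t where h: "((n,t),p) \<in> F" "t \<le> - int k" by blast
      have "(Lstar n (n,r) (n,t), p) \<in> F"
        using filt_prod[OF assms(3) assms(4) h(1)] assms(2) by (simp add: prod_pp)
      then have "((n, r+t),p) \<in> F" using assms(1)
        by (simp add: Lstar_def lmax_def zadd_def zsub_def lle_def)
      then show ?case using h assms(5) by (intro exI[of _ "r+t"]) simp
    qed
  qed
  show ?thesis
  proof
    fix b assume "b \<in> f_omega n p"
    then obtain s where b: "b = ((n,s),p)" "s \<le> 0" unfolding f_omega_def by blast
    obtain t where t: "((n,t),p) \<in> F" "t \<le> - int (nat (-s))" using key by blast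
    have bA: "b \<in> Acar n p" using b assms(1) by (simp add: Acar_iff)
    have "Ale n p ((n,t),p) b" using b t assms(2) by (simp add: Ale_def lle_def)
    then show "b \<in> F" using filt_up[OF assms(3) t(1) bA] by blast
  qed
qed

lemma fwd:
  assumes "n \<ge> 1" "p \<ge> 1" "impl_filter n p F" "F \<noteq> Acar n p"
  shows "F = {Atop n p} \<or> F = f_omega n p \<or> F = up00 n p"
proof -
  have allp: "\<forall>x\<in>F. snd x = p" using L_allp[OF assms] by blast
  have sub: "F \<subseteq> up00 n p" using allp filt_sub[OF assms(3)] L_up[OF assms(2)] by blast
  show ?thesis
  proof (cases "\<exists>m r. ((m,r),p) \<in> F \<and> m < n")
    case True
    then obtain m r where "((m,r),p) \<in> F" "m < n" by blast
    then have z: "((0,0),p) \<in> F" using L_zero00[OF assms(1,2,3) allp] by blast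
    have "up00 n p \<subseteq> F"
    proof
      fix b assume "b \<in> up00 n p"
      then show "b \<in> F" unfolding up00_def using filt_up[OF assms(3) z] by blast
    qed
    then show ?thesis using sub by blast
  next
    case False
    have shape: "\<And>x. x \<in> F \<Longrightarrow> \<exists>r. x = ((n,r),p) \<and> r \<le> 0"
    proof -
      fix x assume x: "x \<in> F"
      obtain m r a where xe: "x = ((m,r),a)" by (metis prod.collapse)
      have "a = p" using allp x xe by auto
      moreover have "x \<in> Acar n p" using filt_sub[OF assms(3) x] .
      ultimately show "\<exists>r. x = ((n,r),p) \<and> r \<le> 0" using False x xe by (auto simp: Acar_iff)
    qed
    show ?thesis
    proof (cases "\<exists>r. ((n,r),p) \<in> F \<and> r < 0")
      case True
      then obtain r where "((n,r),p) \<in> F" "r < 0" by blast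
      then have "f_omega n p \<subseteq> F" using L_neg[OF assms(1,2,3)] by blast
      moreover have "F \<subseteq> f_omega n p" using shape unfolding f_omega_def by blast
      ultimately show ?thesis by blast
    next
      case False
      have "F \<subseteq> {Atop n p}"
      proof
        fix x assume "x \<in> F"
        then show "x \<in> {Atop n p}" using shape[of x] False by (fastforce simp: Atop_def)
      qed
      then show ?thesis using filt_top[OF assms(3)] by blast
    qed
  qed
qed

lemma botA: "n \<ge> 1 \<Longrightarrow> Abot n p \<in> Acar n p"
  by (simp add: Abot_def Acar_iff)

theorem lemma3p2:
  fixes n p :: int
  assumes "n \<ge> 1" and "p \<ge> 1"
  shows "(\<forall>F. (impl_filter n p F \<and> F \<noteq> Acar n p) \<longleftrightarrow>
              (F = {Atop n p} \<or> F = f_omega n p \<or> F = up00 n p))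
         \<and> {Atop n p} \<subset> f_omega n p \<and> f_omega n p \<subset> up00 n p"
proof -
  have f1: "impl_filter n p {Atop n p}"
    unfolding impl_filter_def using assms
    by (auto simp: Atop_def Acar_iff prod_pp Lstar_def lmax_def zadd_def zsub_def lle_def Ale_def)
  have f2: "impl_filter n p (f_omega n p)"
    unfolding impl_filter_def f_omega_def using assms
    by (auto simp: Atop_def Acar_iff prod_pp Lstar_def lmax_def zadd_def zsub_def lle_def Ale_def)
  have f3: "impl_filter n p (up00 n p)"
    unfolding impl_filter_def L_up[OF assms(2)] using assms
    by (auto simp: Atop_def Acar_iff prod_pp Lstar_def lmax_def zadd_def zsub_def lle_def Ale_def)
  have nb: "Abot n p \<notin> {Atop n p}" "Abot n p \<notin> f_omega n p" "Abot n p \<notin> up00 n p"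
    using assms by (auto simp: Abot_def Atop_def f_omega_def L_up)
  have ne: "{Atop n p} \<noteq> Acar n p" "f_omega n p \<noteq> Acar n p" "up00 n p \<noteq> Acar n p"
    using nb botA[OF assms(1)] by blast+
  have s1: "{Atop n p} \<subset> f_omega n p"
  proof -
    have "Atop n p \<in> f_omega n p" by (auto simp: Atop_def f_omega_def)
    moreover have "((n,-1),p) \<in> f_omega n p" "((n,-1),p) \<noteq> Atop n p"
      by (auto simp: Atop_def f_omega_def)
    ultimately show ?thesis by blast
  qed
  have s2: "f_omega n p \<subset> up00 n p"
  proof -
    have "f_omega n p \<subseteq> up00 n p" using assms
      by (auto simp: f_omega_def L_up Acar_iff)
    moreover have "((0,0),p) \<in> up00 n p" "((0,0),p) \<notin> f_omega n p" using assms
      by (auto simp: f_omega_def L_up Acar_iff)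
    ultimately show ?thesis by blast
  qed
  show ?thesis using fwd[OF assms] f1 f2 f3 ne s1 s2 by blast
qed

end
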